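(* Let $0<q<1$, let $n,i$ be integers with $1\le i\le n$, and let $x\in[0,1]$. Then $$\frac{1}{([1-x]_q+[x]_q)^{n-i}}\sum_{k=i-1}^n\frac{\binom{k}{i}}{\binom{n}{i}}B_{k,n}(x,q)=\sum_{k=0}^i q^{\binom{k}{2}}\binom{x}{k}_q[k]_q!\,S(i,k:q).$$
   Context: Let $q$ be a real number with $0<q<1$. For real $x$, the $q$-number is $[x]_q=\frac{1-q^x}{1-q}$. For a nonnegative integer $k$ and $x\in[0,1]$, the modified $q$-Bernstein polynomials $B_{k,n}(x,q)$, $n=0,1,2,\dots$, are defined by the generating function $$\frac{t^k e^{[1-x]_q t}[x]_q^k}{k!}=\sum_{n=0}^\infty B_{k,n}(x,q)\frac{t^n}{n!}.$$ Here $\binom{k}{i}=0$ when $k<i$. Let $[0]_q!=1$ and $[k]_q!=[k]_q[k-1]_q\cdots[1]_q$. The Gaussian binomial coefficient is $\binom{k}{j}_q=\frac{[k]_q!}{[j]_q![k-j]_q!}$ for $0\le j\le k$. For real $x$, $\binom{x}{k}_q=\frac{[x]_q[x-1]_q\cdots[x-k+1]_q}{[k]_q!}$, with $\binom{x}{0}_q=1$. The $q$-Stirling numbers of the second kind are $$S(n,k:q)=\frac{q^{-\binom{k}{2}}}{[k]_q!}\sum_{j=0}^k(-1)^j q^{\binom{j}{2}}\binom{k}{j}_q[k-j]_q^{\,n},$$ with the convention $0^0=1$. *)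

theory Defs
  imports Complex_Main "HOL-Computational_Algebra.Formal_Power_Series"
begin

definition qnum :: "real \<Rightarrow> real \<Rightarrow> real" where
  "qnum q x = (1 - q powr x) / (1 - q)"

definition qfact :: "real \<Rightarrow> nat \<Rightarrow> real" where
  "qfact q k = (\<Prod>j=1..k. qnum q (real j))"

definition gauss_binom :: "real \<Rightarrow> nat \<Rightarrow> nat \<Rightarrow> real" where
  "gauss_binom q k j = qfact q k / (qfact q j * qfact q (k - j))"

definition qbinom_real :: "real \<Rightarrow> real \<Rightarrow> nat \<Rightarrow> real" where
  "qbinom_real q x k = (\<Prod>j<k. qnum q (x - real j)) / qfact q k"

text \<open>q-Stirling numbers of the second kind (0^0 = 1 holds for nat powers).\<close>
definition qstirling2 :: "real \<Rightarrow> nat \<Rightarrow> nat \<Rightarrow> real" where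
  "qstirling2 q n k = inverse (q ^ (k choose 2)) / qfact q k *
     (\<Sum>j=0..k. (-1) ^ j * q ^ (j choose 2) * gauss_binom q k j * (qnum q (real (k - j))) ^ n)"

text \<open>Modified q-Bernstein polynomials via their generating function:
  t^k e^{[1-x]_q t} [x]_q^k / k! = \<Sum>n B_{k,n}(x,q) t^n / n!.\<close>
definition qbern_gf :: "real \<Rightarrow> nat \<Rightarrow> real \<Rightarrow> real fps" where
  "qbern_gf q k x = fps_X ^ k * fps_exp (qnum q (1 - x)) * fps_const ((qnum q x) ^ k / fact k)"

definition qbern :: "real \<Rightarrow> nat \<Rightarrow> nat \<Rightarrow> real \<Rightarrow> real" where
  "qbern q k n x = fact n * fps_nth (qbern_gf q k x) n"

end

theory Submission
  imports Defs
begin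

lemma qbern_eq: "qbern q k n x = (if k \<le> n then real (n choose k) * (qnum q x)^k * (qnum q (1-x))^(n-k) else 0)"
proof -
  have "qbern q k n x = fact n * (if n < k then 0 else (qnum q (1-x))^(n-k) / fact (n-k)) * ((qnum q x)^k / fact k)"
    unfolding qbern_def qbern_gf_def by (simp add: fps_X_power_mult_nth)
  also have "\<dots> = (if k \<le> n then real (n choose k) * (qnum q x)^k * (qnum q (1-x))^(n-k) else 0)"
    by (auto simp: binomial_fact field_simps)
  finally show ?thesis .
qed

lemma lhs_sum:
  fixes a b :: real
  assumes "1 \<le> i" "i \<le> n"
  shows "(\<Sum>k = i - 1..n. real (k choose i) / real (n choose i) * (if k \<le> n then real (n choose k) * b^k * a^(n-k) else 0))
     = b^i * (a+b)^(n-i)"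
proof -
  have ni: "real (n choose i) \<noteq> 0" using assms by simp
  have "(\<Sum>k = i - 1..n. real (k choose i) / real (n choose i) * (if k \<le> n then real (n choose k) * b^k * a^(n-k) else 0))
      = (\<Sum>k = i..n. real (k choose i) / real (n choose i) * (real (n choose k) * b^k * a^(n-k)))"
  proof -
    have e: "{i-1..n} = insert (i-1) {i..n}" using assms by auto
    show ?thesis unfolding e using assms by (subst sum.insert) (auto intro!: sum.cong)
  qed
  also have "\<dots> = (\<Sum>k = i..n. real ((n-i) choose (k-i)) * b^k * a^(n-k))"
  proof (rule sum.cong)
    fix k assume k: "k \<in> {i..n}"
    have "real (n choose k) * real (k choose i) = real (n choose i) * real ((n-i) choose (k-i))"
      using choose_mult[of i k n] k by (metis atLeastAtMost_iff of_nat_mult)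
    then show "real (k choose i) / real (n choose i) * (real (n choose k) * b^k * a^(n-k)) = real ((n-i) choose (k-i)) * b^k * a^(n-k)"
      using ni by (simp add: field_simps)
  qed simp
  also have "\<dots> = (\<Sum>l = 0..n-i. real ((n-i) choose l) * b^(i+l) * a^(n-i-l))"
    by (rule sum.reindex_bij_witness[of _ "\<lambda>l. l + i" "\<lambda>k. k - i"]) (use assms in auto)
  also have "\<dots> = b^i * (\<Sum>l = 0..n-i. real ((n-i) choose l) * b^l * a^(n-i-l))"
    by (simp add: sum_distrib_left power_add algebra_simps)
  also have "\<dots> = b^i * (b+a)^(n-i)" by (simp add: binomial_ring atLeast0AtMost)
  finally show ?thesis by (simp add: add.commute)
qed

lemma ab_pos: assumes "0 < q" "q < 1" "0 \<le> x" "x \<le> 1"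
  shows "qnum q (1-x) + qnum q x > 0"
proof -
  have a: "q powr x \<le> 1" "q powr (1-x) \<le> 1" using assms by (auto intro: powr_le1)
  have "q powr x < 1 \<or> q powr (1-x) < 1"
  proof (cases "x = 0")
    case True then show ?thesis using assms by simp
  next
    case False then have "0 < x" using assms by simp
    then show ?thesis using assms powr01_less_one by blast
  qed
  then have "q powr x + q powr (1-x) < 2" using a by linarith
  moreover have "qnum q (1-x) + qnum q x = (2 - q powr (1-x) - q powr x)/(1-q)"
    unfolding qnum_def by (simp add: add_divide_distrib[symmetric])
  ultimately show ?thesis using assms by simp
qed

context fixes q :: real assumes q0: "0 < q" and q1: "q < 1" begin

lemma Q_nat: "qnum q (real m) = (1 - q^m)/(1-q)"
  by (simp add: qnum_def powr_realpow q0)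

lemma Q_add: "qnum q (real (a+b)) = qnum q (real a) + q^a * qnum q (real b)"
  using q1 by (simp add: Q_nat field_simps power_add del: of_nat_add)

lemma Q_pos: "0 < m \<Longrightarrow> qnum q (real m) > 0"
  using q0 q1 by (simp add: Q_nat power_less_one_iff)

lemma Q0: "qnum q (real 0) = 0" using q0 by (simp add: qnum_def)

lemma Q0': "qnum q 0 = 0" using q0 by (simp add: qnum_def)

lemma qfact0: "qfact q 0 = 1" by (simp add: qfact_def)

lemma qfact_Suc: "qfact q (Suc k) = qnum q (real (Suc k)) * qfact q k"
  unfolding qfact_def by (simp add: prod.nat_ivl_Suc')

lemma qfact_pos: "qfact q k > 0"
  unfolding qfact_def by (rule prod_pos) (auto intro: Q_pos)

lemma g0: "gauss_binom q k 0 = 1"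
  using qfact_pos[of k] by (simp add: gauss_binom_def qfact0)

lemma gdiag: "gauss_binom q k k = 1"
  using qfact_pos[of k] by (simp add: gauss_binom_def qfact0)

lemma gabs: "j \<le> m \<Longrightarrow> gauss_binom q (Suc m) (Suc j) * qnum q (real (Suc j)) = qnum q (real (Suc m)) * gauss_binom q m j"
proof -
  have aux: "\<And>Qm A Q1 J R::real. Q1 \<noteq> 0 \<Longrightarrow> Qm * A / (Q1 * J * R) * Q1 = Qm * (A / (J * R))"
    by (simp add: field_simps)
  show ?thesis unfolding gauss_binom_def using Q_pos[of "Suc j"]
    by (simp only: qfact_Suc diff_Suc_Suc) (rule aux, simp)
qed

lemma gpascal: "j < m \<Longrightarrow> gauss_binom q (Suc m) (Suc j) = gauss_binom q m j + q^(Suc j) * gauss_binom q m (Suc j)"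
proof -
  assume "j < m"
  define r where "r = m - Suc j"
  have m: "m = Suc j + r" using \<open>j < m\<close> by (simp add: r_def)
  have QQ: "qnum q (real (Suc m)) = qnum q (real (Suc j)) + q^(Suc j) * qnum q (real (Suc r))"
  proof -
    have "Suc m = Suc j + Suc r" using m by simp
    then show ?thesis using Q_add[of "Suc j" "Suc r"] by metis
  qed
  have e1: "Suc m - Suc j = Suc r" "m - j = Suc r" "m - Suc j = r" using m by auto
  have aux: "\<And>Q1 Q2 J R A c::real. Q1 > 0 \<Longrightarrow> Q2 > 0 \<Longrightarrow> J > 0 \<Longrightarrow> R > 0 \<Longrightarrow>
      (Q1 + c * Q2) * A / (Q1 * J * (Q2 * R)) = A / (J * (Q2 * R)) + c * (A / (Q1 * J * R))"
    by (simp add: field_simps)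
  have "gauss_binom q (Suc m) (Suc j) = (qnum q (real (Suc j)) + q^(Suc j) * qnum q (real (Suc r))) * qfact q m /
     (qnum q (real (Suc j)) * qfact q j * (qnum q (real (Suc r)) * qfact q r))"
    unfolding gauss_binom_def e1 qfact_Suc QQ ..
  also have "\<dots> = qfact q m / (qfact q j * (qnum q (real (Suc r)) * qfact q r)) + q^(Suc j) * (qfact q m / (qnum q (real (Suc j)) * qfact q j * qfact q r))"
    by (rule aux[OF Q_pos[OF zero_less_Suc] Q_pos[OF zero_less_Suc] qfact_pos qfact_pos])
  also have "\<dots> = gauss_binom q m j + q^(Suc j) * gauss_binom q m (Suc j)"
    unfolding gauss_binom_def e1 qfact_Suc ..
  finally show ?thesis .
qed

definition T :: "nat \<Rightarrow> nat \<Rightarrow> real" where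
  "T n k = (\<Sum>j=0..k. (-1) ^ j * q ^ (j choose 2) * gauss_binom q k j * (qnum q (real (k - j))) ^ n)"

lemma S_T: "qstirling2 q n k = T n k / (q ^ (k choose 2) * qfact q k)"
  unfolding qstirling2_def T_def by (simp add: field_simps)


lemma choose0_2: "(0::nat) choose 2 = 0" by (simp add: numeral_2_eq_2)

lemma choose2_Suc: "(Suc j choose 2) = (j choose 2) + j"
  by (simp add: numeral_2_eq_2)

lemma T_rec: "T (Suc n) (Suc m) = qnum q (real (Suc m)) * T n (Suc m) + q^m * qnum q (real (Suc m)) * T n m"
proof -
  define Qk where "Qk = qnum q (real (Suc m))"
  define f where "f j = (-1)^j * q^(j choose 2) * gauss_binom q (Suc m) j * (qnum q (real (Suc m - j)))^n
      * (qnum q (real (Suc m - j)) - Qk)" for j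
  have "T (Suc n) (Suc m) - Qk * T n (Suc m) = (\<Sum>j=0..Suc m. f j)"
    unfolding T_def f_def by (simp add: sum_subtractf sum_distrib_left algebra_simps)
  also have "\<dots> = f 0 + (\<Sum>j=0..m. f (Suc j))"
    by (simp only: sum.atLeast0_atMost_Suc_shift o_def)
  also have "f 0 = 0" unfolding f_def Qk_def by simp
  also have "(\<Sum>j=0..m. f (Suc j)) = (\<Sum>j=0..m. q^m * Qk * ((-1) ^ j * q ^ (j choose 2) * gauss_binom q m j * (qnum q (real (m - j))) ^ n))"
  proof (rule sum.cong)
    fix j assume "j \<in> {0..m}"
    then have jm: "j \<le> m" by simp
    have QA: "Qk = qnum q (real (m-j)) + q^(m-j) * qnum q (real (Suc j))"
      unfolding Qk_def using Q_add[of "m-j" "Suc j"] jm by (simp add: Suc_diff_le)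
    have qq: "q^(j choose 2) * q^j * q^(m-j) = q^(j choose 2) * q^m"
      using jm by (simp add: power_add[symmetric])
    have "f (Suc j) = (-1)^j * (q^(j choose 2) * q^j * q^(m-j)) * (gauss_binom q (Suc m) (Suc j) * qnum q (real (Suc j))) * (qnum q (real (m - j)))^n"
      unfolding f_def by (simp add: QA choose2_Suc power_add algebra_simps)
    also have "\<dots> = q^m * Qk * ((-1) ^ j * q ^ (j choose 2) * gauss_binom q m j * (qnum q (real (m - j))) ^ n)"
      unfolding qq gabs[OF jm] Qk_def by (simp add: algebra_simps)
    finally show "f (Suc j) = q^m * Qk * ((-1) ^ j * q ^ (j choose 2) * gauss_binom q m j * (qnum q (real (m - j))) ^ n)" .
  qed simp
  also have "\<dots> = q^m * Qk * T n m" unfolding T_def by (simp add: sum_distrib_left)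
  finally show ?thesis unfolding Qk_def by simp
qed

lemma T0: "T 0 (Suc m) = 0"
proof -
  define h where "h j = (-1)^j * q^(j choose 2)" for j :: nat
  define u where "u j = (if j = 0 then 0 else gauss_binom q m (j - 1))" for j
  define v where "v j = (if j \<le> m then q^j * gauss_binom q m j else 0)" for j
  have g: "gauss_binom q (Suc m) j = u j + v j" if "j \<le> Suc m" for j
  proof (cases j)
    case 0 then show ?thesis by (simp add: u_def v_def g0)
  next
    case (Suc j')
    show ?thesis
    proof (cases "j' < m")
      case True then show ?thesis using Suc gpascal[OF True] by (simp add: u_def v_def)
    next
      case False then have "j' = m" using Suc that by simp
      then show ?thesis using Suc by (simp add: u_def v_def gdiag)
    qed
  qed
  have "T 0 (Suc m) = (\<Sum>j=0..Suc m. h j * (u j + v j))"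
    unfolding T_def h_def by (intro sum.cong) (auto simp: g)
  also have "\<dots> = (\<Sum>j=0..Suc m. h j * u j) + (\<Sum>j=0..Suc m. h j * v j)"
    by (simp only: distrib_left sum.distrib)
  also have "(\<Sum>j=0..Suc m. h j * u j) = (\<Sum>j=0..m. h (Suc j) * gauss_binom q m j)"
    by (simp only: sum.atLeast0_atMost_Suc_shift o_def) (simp add: u_def)
  also have "(\<Sum>j=0..Suc m. h j * v j) = (\<Sum>j=0..m. h j * (q^j * gauss_binom q m j))"
    by (simp add: v_def)
  also have "(\<Sum>j=0..m. h (Suc j) * gauss_binom q m j) = - (\<Sum>j=0..m. h j * (q^j * gauss_binom q m j))"
    unfolding h_def by (simp add: choose2_Suc power_add sum_negf[symmetric] algebra_simps)
  finally show ?thesis by simp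
qed

lemma T_vanish: "n < k \<Longrightarrow> T n k = 0"
proof (induction n arbitrary: k)
  case 0 then obtain m where "k = Suc m" by (cases k) auto
  then show ?case using T0 by simp
next
  case (Suc n)
  then obtain m where k: "k = Suc m" by (cases k) auto
  then have "n < Suc m" "n < m" using Suc.prems by auto
  then show ?case unfolding k T_rec using Suc.IH by simp
qed

lemma S_rec: "qstirling2 q (Suc n) (Suc m) = qnum q (real (Suc m)) * qstirling2 q n (Suc m) + qstirling2 q n m"
proof -
  have p: "q^(m choose 2) > 0" "q^m > 0" using q0 by auto
  have "qstirling2 q (Suc n) (Suc m) = (qnum q (real (Suc m)) * T n (Suc m) + q^m * qnum q (real (Suc m)) * T n m) /
      (q^(Suc m choose 2) * qfact q (Suc m))" by (simp add: S_T T_rec)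
  also have "\<dots> = qnum q (real (Suc m)) * (T n (Suc m) / (q^(Suc m choose 2) * qfact q (Suc m))) + T n m / (q^(m choose 2) * qfact q m)"
  proof -
    have aux: "\<And>Qk A B c C F::real. Qk > 0 \<Longrightarrow> c > 0 \<Longrightarrow> C > 0 \<Longrightarrow> F > 0 \<Longrightarrow>
      (Qk*A + c*Qk*B)/(C*c*(Qk*F)) = Qk*(A/(C*c*(Qk*F))) + B/(C*F)"
      by (simp add: field_simps)
    show ?thesis unfolding choose2_Suc qfact_Suc power_add
      by (rule aux[OF Q_pos[OF zero_less_Suc] p(2) p(1) qfact_pos[of m]])
  qed
  finally show ?thesis by (simp add: S_T)
qed

lemma S_Suc0: "qstirling2 q (Suc n) 0 = 0"
  by (simp add: S_T T_def Q0' g0 qfact0)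

lemma S00: "qstirling2 q 0 0 = 1"
  by (simp add: S_T T_def g0 qfact0)

definition P :: "real \<Rightarrow> nat \<Rightarrow> real" where
  "P x k = q^(k choose 2) * (\<Prod>j<k. qnum q (x - real j))"

lemma bP: "qnum q x * P x k = qnum q (real k) * P x k + P x (Suc k)"
proof -
  have pw: "q^k * q powr (x - real k) = q powr x"
    using q0 by (simp add: powr_diff powr_realpow)
  have "qnum q x = qnum q (real k) + q^k * qnum q (x - real k)"
    unfolding qnum_def using q1 pw by (simp add: powr_realpow q0 field_simps)
  then show ?thesis unfolding P_def by (simp add: choose2_Suc power_add algebra_simps)
qed

lemma main_pow: "(qnum q x)^n = (\<Sum>k=0..n. P x k * qstirling2 q n k)"
proof (induction n)
  case 0 then show ?case by (simp add: S00 P_def choose0_2)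
next
  case (Suc n)
  define Q where "Q k = qnum q (real k)" for k :: nat
  have "(qnum q x)^Suc n = (\<Sum>k=0..n. (qnum q x * P x k) * qstirling2 q n k)"
    using Suc.IH by (simp add: sum_distrib_left algebra_simps)
  also have "\<dots> = (\<Sum>k=0..n. Q k * P x k * qstirling2 q n k) + (\<Sum>k=0..n. P x (Suc k) * qstirling2 q n k)"
    unfolding bP Q_def by (simp add: sum.distrib[symmetric] algebra_simps)
  also have "(\<Sum>k=0..n. Q k * P x k * qstirling2 q n k) = (\<Sum>k=0..Suc n. Q k * P x k * qstirling2 q n k)"
    using T_vanish[of n "Suc n"] by (simp add: S_T)
  also have "\<dots> = (\<Sum>k=0..n. Q (Suc k) * P x (Suc k) * qstirling2 q n (Suc k))"
    by (simp only: sum.atLeast0_atMost_Suc_shift o_def) (simp add: Q_def Q0')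
  also have "(\<Sum>k=0..n. Q (Suc k) * P x (Suc k) * qstirling2 q n (Suc k)) + (\<Sum>k=0..n. P x (Suc k) * qstirling2 q n k)
     = (\<Sum>k=0..Suc n. P x k * qstirling2 q (Suc n) k)"
    by (simp only: sum.atLeast0_atMost_Suc_shift o_def) (simp add: S_Suc0 S_rec Q_def sum.distrib[symmetric] algebra_simps)
  finally show ?case .
qed

lemma rhs_eq: "(\<Sum>k = 0..i. q ^ (k choose 2) * qbinom_real q x k * qfact q k * qstirling2 q i k) = (qnum q x)^i"
proof -
  have e: "qbinom_real q x k * qfact q k = (\<Prod>j<k. qnum q (x - real j))" for k
    using qfact_pos[of k] by (simp add: qbinom_real_def)
  show ?thesis unfolding main_pow P_def by (intro sum.cong) (simp_all add: mult.assoc e)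
qed

end
theorem theorem8:
  fixes q x :: real and n i :: nat
  assumes "0 < q" "q < 1" "1 \<le> i" "i \<le> n" "0 \<le> x" "x \<le> 1"
  shows "1 / (qnum q (1 - x) + qnum q x) ^ (n - i) *
           (\<Sum>k = i - 1..n. real (k choose i) / real (n choose i) * qbern q k n x)
         = (\<Sum>k = 0..i. q ^ (k choose 2) * qbinom_real q x k * qfact q k * qstirling2 q i k)"
proof -
  have pos: "qnum q (1 - x) + qnum q x > 0" using ab_pos assms by blast
  have "(\<Sum>k = i - 1..n. real (k choose i) / real (n choose i) * qbern q k n x)
      = (qnum q x)^i * (qnum q (1 - x) + qnum q x)^(n-i)"
    unfolding qbern_eq by (rule lhs_sum[OF assms(3,4)])
  moreover have "(\<Sum>k = 0..i. q ^ (k choose 2) * qbinom_real q x k * qfact q k * qstirling2 q i k) = (qnum q x)^i"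
    using rhs_eq[OF assms(1,2)] .
  moreover have "\<And>s b::real. s > 0 \<Longrightarrow> 1 / s^(n-i) * (b * s^(n-i)) = b" by simp
  ultimately show ?thesis using pos by metis
qed

end
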